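(* Let $q=p^\ell$ be a prime power with $p$ prime and $d$ a positive integer; write $d+1=s(q-q/p)+r$ with integers $s\ge0$, $0\le r<q-q/p$. Let $k\ge s+1$, define $e^\star\in\{0,\dots,q-1\}^k$ by $e^\star_i=q-q/p$ for $1\le i\le s$, $e^\star_{s+1}=q-1$, $e^\star_j=0$ for $j\ge s+2$, let $d^\star=|e^\star|_1$, and let $\mathcal{E}=\{e\in\{0,\dots,q-1\}^k: |e|_1\le d^\star-1\}$. Let $Q(k)=2q^{s+1}\log(q)\binom{k+d^\star}{d^\star}$ and choose $S\subseteq\mathbb{F}_q^k$ uniformly at random among subsets of size $Q(k)$. Consider the linear system over $\mathbb{F}_q$ in variables $\{z_\alpha\}_{\alpha\in S}$ consisting of the equations $\sum_{\alpha\in S}z_\alpha\alpha^{e'}=0$ for each $e'\in\mathcal{E}$, together with $\sum_{\alpha\in S}z_\alpha\alpha^{e^\star}=1$. Then the probability that this system has no solution is at most $q^{-\binom{k+d^\star}{d^\star}}$.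
   Context: For $\alpha\in\mathbb{F}_q^k$ and $e\in\{0,\dots,q-1\}^k$, $\alpha^e=\prod_i\alpha_i^{e_i}$ (with $0^0=1$); $|e|_1=\sum_ie_i$. Here $\log$ is the natural logarithm, and it is implicitly assumed that $Q(k)$ is an integer with $Q(k)\le q^k$ so that $S$ can be chosen. *)

theory Defs
  imports Complex_Main "HOL-Library.FuncSet" "HOL-Library.Cardinality" "HOL-Computational_Algebra.Primes"
begin

text \<open>Points of F_q^k are represented as functions on the index set {0..<k}
  (extensional, i.e. undefined outside). Coordinates are 0-based: paper index i
  corresponds to index i-1 here.\<close>

definition points :: "nat \<Rightarrow> (nat \<Rightarrow> 'a) set" where
  "points k = PiE {..<k} (\<lambda>_. UNIV)"

definition exps :: "nat \<Rightarrow> nat \<Rightarrow> (nat \<Rightarrow> nat) set" where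
  "exps q k = PiE {..<k} (\<lambda>_. {..<q})"

definition monomial_eval :: "nat \<Rightarrow> (nat \<Rightarrow> 'a::comm_monoid_mult) \<Rightarrow> (nat \<Rightarrow> nat) \<Rightarrow> 'a" where
  "monomial_eval k \<alpha> e = (\<Prod>i<k. \<alpha> i ^ e i)"

definition norm1 :: "nat \<Rightarrow> (nat \<Rightarrow> nat) \<Rightarrow> nat" where
  "norm1 k e = (\<Sum>i<k. e i)"

definition estar :: "nat \<Rightarrow> nat \<Rightarrow> nat \<Rightarrow> nat \<Rightarrow> (nat \<Rightarrow> nat)" where
  "estar p q s k = restrict (\<lambda>i. if i < s then q - q div p else if i = s then q - 1 else 0) {..<k}"

definition Ecal :: "nat \<Rightarrow> nat \<Rightarrow> nat \<Rightarrow> (nat \<Rightarrow> nat) set" where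
  "Ecal q k dstar = {e \<in> exps q k. norm1 k e \<le> dstar - 1}"

definition system_solvable ::
  "nat \<Rightarrow> nat \<Rightarrow> nat \<Rightarrow> (nat \<Rightarrow> nat) \<Rightarrow> (nat \<Rightarrow> 'a::field) set \<Rightarrow> bool" where
  "system_solvable q k dstar es S \<longleftrightarrow>
     (\<exists>z :: (nat \<Rightarrow> 'a) \<Rightarrow> 'a.
        (\<forall>e' \<in> Ecal q k dstar. (\<Sum>\<alpha>\<in>S. z \<alpha> * monomial_eval k \<alpha> e') = 0) \<and>
        (\<Sum>\<alpha>\<in>S. z \<alpha> * monomial_eval k \<alpha> es) = 1)"

end

theory Submission
  imports Defs "HOL-Computational_Algebra.Polynomial"
begin


lemma card_ge2: "CARD('a::{finite,field}) \<ge> 2"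
proof -
  have "{0::'a,1} \<subseteq> UNIV" by simp
  hence "card {0::'a,1} \<le> CARD('a)" by (intro card_mono) auto
  thus ?thesis by simp
qed

lemma card_nz: "card (- {0::'a::{finite,zero}}) = CARD('a) - 1"
proof -
  have "- {0::'a} = UNIV - {0}" by auto
  thus ?thesis by (simp add: card_Diff_singleton)
qed

lemma of_nat_card0: "of_nat CARD('a::{finite,field}) = (0::'a)"
proof -
  have "(\<Sum>t\<in>UNIV. t + 1) = (\<Sum>t\<in>UNIV. (t::'a))"
  proof -
    have inj: "inj (\<lambda>t::'a. t + 1)" by (auto simp: inj_def)
    have im: "range (\<lambda>t::'a. t + 1) = UNIV" 
    proof -
      have "x \<in> range (\<lambda>t::'a. t + 1)" for x
        by (rule image_eqI[where x="x - 1"]) simp_all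
      thus ?thesis by blast
    qed
    show ?thesis using sum.reindex[OF inj, of id] im by simp
  qed
  moreover have "(\<Sum>t\<in>UNIV. t + 1) = (\<Sum>t\<in>UNIV. (t::'a)) + of_nat CARD('a)"
    by (simp add: sum.distrib)
  ultimately show ?thesis by simp
qed

lemma fermat_ff: "(t::'a::{finite,field}) \<noteq> 0 \<Longrightarrow> t ^ (CARD('a) - 1) = 1"
proof -
  assume t: "t \<noteq> 0"
  let ?A = "- {0::'a}"
  have inj: "inj_on (\<lambda>u. t * u) ?A" using t by (auto simp: inj_on_def)
  have im: "(\<lambda>u. t * u) ` ?A = ?A"
  proof
    show "(\<lambda>u. t * u) ` ?A \<subseteq> ?A" using t by auto
    show "?A \<subseteq> (\<lambda>u. t * u) ` ?A"
    proof
      fix x assume "x \<in> ?A"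
      hence "x = t * (x / t)" "x / t \<in> ?A" using t by auto
      thus "x \<in> (\<lambda>u. t * u) ` ?A" by blast
    qed
  qed
  have "prod id ?A = prod (\<lambda>u. t * u) ?A" using prod.reindex[OF inj, of id] im by simp
  also have "\<dots> = t ^ card ?A * prod id ?A" by (simp add: prod.distrib)
  finally have "t ^ card ?A * prod id ?A = 1 * prod id ?A" by simp
  moreover have "prod id ?A \<noteq> 0" by (simp add: prod_zero_iff)
  ultimately have "t ^ card ?A = 1" by simp
  moreover have "card ?A = CARD('a) - 1"
    by (simp add: card_nz)
  ultimately show ?thesis by simp
qed

lemma sig_small: assumes "1 \<le> j" "j < CARD('a::{finite,field}) - 1"
  shows "(\<Sum>t\<in>UNIV. (t::'a) ^ j) = 0"
proof -
  have "\<exists>a::'a. a \<noteq> 0 \<and> a ^ j \<noteq> 1"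
  proof (rule ccontr)
    assume "\<not> ?thesis"
    hence all: "\<And>a::'a. a \<noteq> 0 \<Longrightarrow> a ^ j = 1" by blast
    define pp where "pp = monom (1::'a) j + [:-1:]"
    have dp: "degree pp = j" unfolding pp_def using assms(1)
      by (simp add: degree_add_eq_left degree_monom_eq)
    hence "pp \<noteq> 0" using assms(1) by auto
    hence "card {x. poly pp x = 0} \<le> j" using card_poly_roots_bound dp by metis
    moreover have "- {0::'a} \<subseteq> {x. poly pp x = 0}" using all by (auto simp: pp_def poly_monom)
    hence "card (- {0::'a}) \<le> card {x. poly pp x = 0}" by (intro card_mono) auto
    moreover have "card (- {0::'a}) = CARD('a) - 1" by (simp add: card_nz)
    ultimately show False using assms by linarith
  qed
  then obtain a :: 'a where a: "a \<noteq> 0" "a ^ j \<noteq> 1" by blast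
  have inj: "inj (\<lambda>u. a * u)" using a by (auto simp: inj_def)
  have im: "range (\<lambda>u. a * u) = UNIV"
  proof -
    have "x = a * (x / a)" for x using a by auto
    thus ?thesis by blast
  qed
  have "(\<Sum>t\<in>UNIV. t ^ j) = (\<Sum>t\<in>UNIV. (a * t) ^ j)"
    using sum.reindex[OF inj, of "\<lambda>t. t ^ j"] im by simp
  also have "\<dots> = a ^ j * (\<Sum>t\<in>UNIV. t ^ j)" by (simp add: power_mult_distrib sum_distrib_left)
  finally have "(1 - a ^ j) * (\<Sum>t\<in>UNIV. t ^ j) = 0" by (simp add: algebra_simps)
  thus ?thesis using a by simp
qed

lemma sig_qm1: "(\<Sum>t\<in>UNIV. (t::'a::{finite,field}) ^ (CARD('a) - 1)) = -1"
proof -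
  have q2: "CARD('a) \<ge> 2" by (rule card_ge2)
  have "(\<Sum>t\<in>UNIV. (t::'a) ^ (CARD('a) - 1)) = (\<Sum>t\<in>UNIV. if (t::'a) = 0 then 0 else 1)"
  proof -
    have "t ^ (CARD('a) - 1) = (if t = 0 then 0 else 1)" for t :: 'a
      using q2 fermat_ff[of t] by (auto simp: zero_power)
    thus ?thesis by (intro sum.cong refl) blast
  qed
  also have "\<dots> = of_nat (card (- {0::'a}))"
    by (simp add: sum.If_cases Compl_eq_Diff_UNIV)
  also have "card (- {0::'a}) = CARD('a) - 1" by (simp add: card_nz)
  also have "of_nat (CARD('a) - 1) = (of_nat CARD('a) - 1 :: 'a)" using q2 by (simp add: of_nat_diff)
  finally show ?thesis by (simp add: of_nat_card0)
qed

lemma sig_val: assumes "j + 2 < 2 * CARD('a::{finite,field})"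
  shows "(\<Sum>t\<in>UNIV. (t::'a) ^ j) = (if j = CARD('a) - 1 then -1 else 0)"
proof -
  have q2: "CARD('a) \<ge> 2" by (rule card_ge2)
  consider "j = 0" | "1 \<le> j \<and> j < CARD('a) - 1" | "j = CARD('a) - 1" | "j \<ge> CARD('a)" by linarith
  thus ?thesis
  proof cases
    case 1 thus ?thesis using q2 by (simp add: of_nat_card0)
  next
    case 2 thus ?thesis using sig_small by auto
  next
    case 3 thus ?thesis using sig_qm1 by auto
  next
    case 4
    define j' where "j' = j - (CARD('a) - 1)"
    have jj: "j = j' + (CARD('a) - 1)" "1 \<le> j'" "j' < CARD('a) - 1" using 4 assms q2 unfolding j'_def by auto
    have "(t::'a) ^ j = t ^ j'" for t
    proof (cases "t = 0")
      case True thus ?thesis using jj by (simp add: zero_power)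
    next
      case False
      have "t ^ j = t ^ (j' + (CARD('a) - 1))" using jj(1) by simp
      also have "\<dots> = t ^ j' * t ^ (CARD('a) - 1)" by (rule power_add)
      finally show ?thesis using fermat_ff[OF False] by simp
    qed
    hence "(\<Sum>t\<in>UNIV. (t::'a) ^ j) = (\<Sum>t\<in>UNIV. t ^ j')" by simp
    also have "\<dots> = 0" using sig_small jj by auto
    finally show ?thesis using 4 q2 by auto
  qed
qed



lemma mono_split:
  assumes "s < k"
  shows "monomial_eval k (\<lambda>i. if i \<le> s then x i else b i) e =
         (\<Prod>i\<le>s. (x i :: 'a::comm_monoid_mult) ^ e i) * (\<Prod>i\<in>{s<..<k}. b i ^ e i)"
proof -
  have U: "{..<k} = {..s} \<union> {s<..<k}" using assms by auto
  have "monomial_eval k (\<lambda>i. if i \<le> s then x i else b i) e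
        = (\<Prod>i\<in>{..s} \<union> {s<..<k}. (if i \<le> s then x i else b i) ^ e i)"
    unfolding monomial_eval_def U ..
  also have "\<dots> = (\<Prod>i\<le>s. (if i \<le> s then x i else b i) ^ e i) * (\<Prod>i\<in>{s<..<k}. (if i \<le> s then x i else b i) ^ e i)"
    by (rule prod.union_disjoint) auto
  also have "\<dots> = (\<Prod>i\<le>s. x i ^ e i) * (\<Prod>i\<in>{s<..<k}. b i ^ e i)"
    by (intro arg_cong2[where f="(*)"] prod.cong) auto
  finally show ?thesis .
qed

lemma Lmono:
  fixes b :: "nat \<Rightarrow> 'a::{finite,field}"
  assumes sk: "s < k" and es: "\<And>i. i \<le> s \<Longrightarrow> 1 \<le> es i \<and> es i < CARD('a)"
    and e: "\<And>i. i \<le> s \<Longrightarrow> e i < CARD('a)"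
  shows "(\<Sum>x\<in>PiE {..s} (\<lambda>_. UNIV::'a set). monomial_eval k (\<lambda>i. if i \<le> s then x i else b i) e
            * (\<Prod>i\<le>s. x i ^ (CARD('a) - 1 - es i)))
       = (\<Prod>i\<in>{s<..<k}. b i ^ e i) * (if \<forall>i\<le>s. e i = es i then (-1) ^ (s+1) else 0)"
proof -
  let ?q = "CARD('a)"
  have "(\<Sum>x\<in>PiE {..s} (\<lambda>_. UNIV::'a set). monomial_eval k (\<lambda>i. if i \<le> s then x i else b i) e
            * (\<Prod>i\<le>s. x i ^ (?q - 1 - es i)))
      = (\<Sum>x\<in>PiE {..s} (\<lambda>_. UNIV::'a set). (\<Prod>i\<in>{s<..<k}. b i ^ e i) * (\<Prod>i\<le>s. x i ^ (e i + (?q - 1 - es i))))"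
    by (intro sum.cong refl) (simp add: mono_split[OF sk] power_add prod.distrib algebra_simps)
  also have "\<dots> = (\<Prod>i\<in>{s<..<k}. b i ^ e i) * (\<Sum>x\<in>PiE {..s} (\<lambda>_. UNIV::'a set). (\<Prod>i\<le>s. x i ^ (e i + (?q - 1 - es i))))"
    by (simp add: sum_distrib_left)
  also have "(\<Sum>x\<in>PiE {..s} (\<lambda>_. UNIV::'a set). (\<Prod>i\<le>s. x i ^ (e i + (?q - 1 - es i))))
           = (\<Prod>i\<le>s. \<Sum>t\<in>(UNIV::'a set). t ^ (e i + (?q - 1 - es i)))"
  proof -
    have "(\<Prod>i\<le>s. \<Sum>t\<in>(UNIV::'a set). t ^ (e i + (?q - 1 - es i))) =
       (\<Sum>g\<in>PiE {..s} (\<lambda>_. UNIV::'a set). \<Prod>i\<le>s. g i ^ (e i + (?q - 1 - es i)))"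
      by (rule prod_sum_PiE) auto
    thus ?thesis by simp
  qed
  also have "\<dots> = (\<Prod>i\<le>s. if e i = es i then -1 else 0)"
  proof (rule prod.cong[OF refl])
    fix i assume "i \<in> {..s}"
    hence i: "1 \<le> es i" "es i < ?q" "e i < ?q" using es e by auto
    have "(\<Sum>t\<in>UNIV. (t::'a) ^ (e i + (?q - 1 - es i))) = (if e i + (?q - 1 - es i) = ?q - 1 then -1 else 0)"
      by (rule sig_val) (use i in linarith)
    also have "(e i + (?q - 1 - es i) = ?q - 1) = (e i = es i)" using i by linarith
    finally show "(\<Sum>t\<in>UNIV. (t::'a) ^ (e i + (?q - 1 - es i))) = (if e i = es i then -1 else 0)" by simp
  qed
  also have "\<dots> = (if \<forall>i\<le>s. e i = es i then (-1) ^ (s+1) else 0)"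
  proof (cases "\<forall>i\<le>s. e i = es i")
    case True thus ?thesis by simp
  next
    case False
    then obtain i where "i \<le> s" "e i \<noteq> es i" by blast
    thus ?thesis by (intro trans[OF prod_zero]) auto
  qed
  finally show ?thesis .
qed



lemma fiber_nonzero:
  fixes b :: "nat \<Rightarrow> 'a::{finite,field}" and c :: "(nat \<Rightarrow> nat) \<Rightarrow> 'a"
  assumes sk: "s < k" and es: "\<And>i. i \<le> s \<Longrightarrow> 1 \<le> es i \<and> es i < CARD('a)"
    and es0: "\<And>i. s < i \<Longrightarrow> i < k \<Longrightarrow> es i = 0"
    and E: "\<And>e. e \<in> E \<Longrightarrow> (\<forall>i\<le>s. e i < CARD('a)) \<and> \<not>(\<forall>i\<le>s. e i = es i)"
  shows "\<exists>x \<in> PiE {..s} (\<lambda>_. UNIV::'a set).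
     monomial_eval k (\<lambda>i. if i \<le> s then x i else b i) es
       - (\<Sum>e\<in>E. c e * monomial_eval k (\<lambda>i. if i \<le> s then x i else b i) e) \<noteq> 0"
proof (rule ccontr)
  assume "\<not> ?thesis"
  hence Z: "\<And>x. x \<in> PiE {..s} (\<lambda>_. UNIV::'a set) \<Longrightarrow> monomial_eval k (\<lambda>i. if i \<le> s then x i else b i) es
       - (\<Sum>e\<in>E. c e * monomial_eval k (\<lambda>i. if i \<le> s then x i else b i) e) = 0" by blast
  define W where "W = (\<lambda>x::nat\<Rightarrow>'a. \<Prod>i\<le>s. x i ^ (CARD('a) - 1 - es i))"
  define M where "M = (\<lambda>x e. monomial_eval k (\<lambda>i. if i \<le> s then (x i::'a) else b i) e)"
  let ?P = "PiE {..s} (\<lambda>_. UNIV::'a set)"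
  have "0 = (\<Sum>x\<in>?P. (M x es - (\<Sum>e\<in>E. c e * M x e)) * W x)"
    using Z unfolding M_def by simp
  also have "\<dots> = (\<Sum>x\<in>?P. M x es * W x) - (\<Sum>e\<in>E. c e * (\<Sum>x\<in>?P. M x e * W x))"
    by (simp add: sum_subtractf left_diff_distrib sum_distrib_left sum_distrib_right sum.swap[of _ E] algebra_simps)
  also have "(\<Sum>x\<in>?P. M x es * W x) = (\<Prod>i\<in>{s<..<k}. b i ^ es i) * (-1) ^ (s+1)"
    unfolding M_def W_def by (subst Lmono[OF sk]) (use es in auto)
  also have "(\<Prod>i\<in>{s<..<k}. b i ^ es i) = 1" using es0 by (intro prod.neutral) auto
  also have "(\<Sum>e\<in>E. c e * (\<Sum>x\<in>?P. M x e * W x)) = 0"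
  proof (rule sum.neutral, rule ballI)
    fix e assume e: "e \<in> E"
    have "(\<Sum>x\<in>?P. M x e * W x) = (\<Prod>i\<in>{s<..<k}. b i ^ e i) * (if \<forall>i\<le>s. e i = es i then (-1) ^ (s+1) else 0)"
      unfolding M_def W_def by (rule Lmono[OF sk]) (use es E[OF e] in auto)
    thus "c e * (\<Sum>x\<in>?P. M x e * W x) = 0" using E[OF e] by simp
  qed
  finally show False by simp
qed

lemma nz_count:
  fixes c :: "(nat \<Rightarrow> nat) \<Rightarrow> 'a::{finite,field}"
  assumes sk: "s < k" and es: "\<And>i. i \<le> s \<Longrightarrow> 1 \<le> es i \<and> es i < CARD('a)"
    and es0: "\<And>i. s < i \<Longrightarrow> i < k \<Longrightarrow> es i = 0"
    and E: "\<And>e. e \<in> E \<Longrightarrow> (\<forall>i\<le>s. e i < CARD('a)) \<and> \<not>(\<forall>i\<le>s. e i = es i)"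
  shows "CARD('a) ^ (k - s - 1) \<le> card {\<alpha> \<in> points k. monomial_eval k \<alpha> es - (\<Sum>e\<in>E. c e * monomial_eval k \<alpha> e) \<noteq> (0::'a)}"
proof -
  let ?NZ = "{\<alpha> \<in> points k. monomial_eval k \<alpha> es - (\<Sum>e\<in>E. c e * monomial_eval k \<alpha> e) \<noteq> (0::'a)}"
  let ?B = "PiE {s<..<k} (\<lambda>_. UNIV::'a set)"
  have "?B \<subseteq> (\<lambda>\<alpha>. restrict \<alpha> {s<..<k}) ` ?NZ"
  proof
    fix b assume b: "b \<in> ?B"
    obtain x where x: "x \<in> PiE {..s} (\<lambda>_. UNIV::'a set)"
      "monomial_eval k (\<lambda>i. if i \<le> s then x i else b i) es
       - (\<Sum>e\<in>E. c e * monomial_eval k (\<lambda>i. if i \<le> s then x i else b i) e) \<noteq> 0"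
      using fiber_nonzero[OF sk es es0 E] by blast
    have mem: "(\<lambda>i. if i \<le> s then x i else b i) \<in> points k"
      unfolding points_def using x(1) b sk by (auto simp: PiE_def extensional_def)
    have "restrict (\<lambda>i. if i \<le> s then x i else b i) {s<..<k} = b"
      using b by (auto simp: restrict_def PiE_def extensional_def)
    thus "b \<in> (\<lambda>\<alpha>. restrict \<alpha> {s<..<k}) ` ?NZ" using mem x(2)
      by (intro image_eqI[where x="\<lambda>i. if i \<le> s then x i else b i"]) auto
  qed
  moreover have finP: "finite (points k :: (nat\<Rightarrow>'a) set)" by (simp add: points_def finite_PiE)
  hence finNZ: "finite ?NZ" by (rule rev_finite_subset) auto
  ultimately have "card ?B \<le> card ((\<lambda>\<alpha>. restrict \<alpha> {s<..<k}) ` ?NZ)"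
    by (intro card_mono finite_imageI)
  also have "\<dots> \<le> card ?NZ" by (rule card_image_le[OF finNZ])
  finally show ?thesis by (simp add: card_PiE)
qed




lemma dot_lin1: "(\<Sum>\<alpha>\<in>S. (z1 \<alpha> - c * z2 \<alpha>) * x \<alpha>) = (\<Sum>\<alpha>\<in>S. z1 \<alpha> * x \<alpha>) - c * (\<Sum>\<alpha>\<in>S. z2 \<alpha> * (x \<alpha> :: 'a::field))"
  by (simp add: algebra_simps sum_subtractf sum_distrib_left)

lemma dot_lin2: "(\<Sum>\<alpha>\<in>S. z \<alpha> * (w \<alpha> - c * v \<alpha>)) = (\<Sum>\<alpha>\<in>S. z \<alpha> * w \<alpha>) - c * (\<Sum>\<alpha>\<in>S. z \<alpha> * (v \<alpha> :: 'a::field))"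
  by (simp add: algebra_simps sum_subtractf sum_distrib_left)

lemma dual:
  fixes u :: "'e \<Rightarrow> 'p \<Rightarrow> 'a::field" and S :: "'p set"
  assumes "finite E" "finite S"
  shows "(\<exists>c. \<forall>\<alpha>\<in>S. w \<alpha> = (\<Sum>e\<in>E. c e * u e \<alpha>)) \<or>
         (\<exists>z. (\<forall>e\<in>E. (\<Sum>\<alpha>\<in>S. z \<alpha> * u e \<alpha>) = 0) \<and> (\<Sum>\<alpha>\<in>S. z \<alpha> * w \<alpha>) = 1)"
  using assms(1)
proof (induction E arbitrary: w rule: finite_induct)
  case empty
  show ?case
  proof (cases "\<forall>\<alpha>\<in>S. w \<alpha> = 0")
    case True thus ?thesis by simp
  next
    case False
    then obtain a0 where a0: "a0 \<in> S" "w a0 \<noteq> 0" by blast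
    define z where "z = (\<lambda>\<alpha>. if \<alpha> = a0 then inverse (w a0) else 0)"
    have "(\<Sum>\<alpha>\<in>S. z \<alpha> * w \<alpha>) = (\<Sum>\<alpha>\<in>S. if \<alpha> = a0 then inverse (w a0) * w \<alpha> else 0)"
      by (rule sum.cong) (auto simp: z_def)
    also have "\<dots> = 1" using a0 assms(2) by (simp add: sum.delta')
    finally show ?thesis by blast
  qed
next
  case (insert e0 E)
  show ?case
  proof (cases "\<exists>c. \<forall>\<alpha>\<in>S. u e0 \<alpha> = (\<Sum>e\<in>E. c e * u e \<alpha>)")
    case True
    then obtain c0 where c0: "\<forall>\<alpha>\<in>S. u e0 \<alpha> = (\<Sum>e\<in>E. c0 e * u e \<alpha>)" by blast
    from insert.IH[of w] show ?thesis
    proof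
      assume "\<exists>c. \<forall>\<alpha>\<in>S. w \<alpha> = (\<Sum>e\<in>E. c e * u e \<alpha>)"
      then obtain c where c: "\<forall>\<alpha>\<in>S. w \<alpha> = (\<Sum>e\<in>E. c e * u e \<alpha>)" by blast
      have "\<forall>\<alpha>\<in>S. w \<alpha> = (\<Sum>e\<in>insert e0 E. (c(e0 := 0)) e * u e \<alpha>)"
      proof
        fix \<alpha> assume "\<alpha> \<in> S"
        have "(\<Sum>e\<in>insert e0 E. (c(e0 := 0)) e * u e \<alpha>) = (\<Sum>e\<in>E. (c(e0 := 0)) e * u e \<alpha>)"
          using insert by simp
        also have "\<dots> = (\<Sum>e\<in>E. c e * u e \<alpha>)" by (rule sum.cong) (use insert in auto)
        finally show "w \<alpha> = (\<Sum>e\<in>insert e0 E. (c(e0 := 0)) e * u e \<alpha>)" using c \<open>\<alpha> \<in> S\<close> by simp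
      qed
      thus ?thesis by blast
    next
      assume "\<exists>z. (\<forall>e\<in>E. (\<Sum>\<alpha>\<in>S. z \<alpha> * u e \<alpha>) = 0) \<and> (\<Sum>\<alpha>\<in>S. z \<alpha> * w \<alpha>) = 1"
      then obtain z where z: "\<forall>e\<in>E. (\<Sum>\<alpha>\<in>S. z \<alpha> * u e \<alpha>) = 0" "(\<Sum>\<alpha>\<in>S. z \<alpha> * w \<alpha>) = 1" by blast
      have "(\<Sum>\<alpha>\<in>S. z \<alpha> * u e0 \<alpha>) = (\<Sum>\<alpha>\<in>S. z \<alpha> * (\<Sum>e\<in>E. c0 e * u e \<alpha>))"
        by (rule sum.cong) (use c0 in auto)
      also have "\<dots> = (\<Sum>e\<in>E. c0 e * (\<Sum>\<alpha>\<in>S. z \<alpha> * u e \<alpha>))"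
        by (simp add: sum_distrib_left sum.swap[of _ S] algebra_simps)
      also have "\<dots> = 0" using z(1) by simp
      finally show ?thesis using z by auto
    qed
  next
    case False
    with insert.IH[of "u e0"] obtain z2 where
      z2: "\<forall>e\<in>E. (\<Sum>\<alpha>\<in>S. z2 \<alpha> * u e \<alpha>) = 0" "(\<Sum>\<alpha>\<in>S. z2 \<alpha> * u e0 \<alpha>) = 1" by blast
    define t where "t = (\<Sum>\<alpha>\<in>S. z2 \<alpha> * w \<alpha>)"
    define w' where "w' = (\<lambda>\<alpha>. w \<alpha> - t * u e0 \<alpha>)"
    from insert.IH[of w'] show ?thesis
    proof
      assume "\<exists>c. \<forall>\<alpha>\<in>S. w' \<alpha> = (\<Sum>e\<in>E. c e * u e \<alpha>)"
      then obtain c where c: "\<forall>\<alpha>\<in>S. w' \<alpha> = (\<Sum>e\<in>E. c e * u e \<alpha>)" by blast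
      have "\<forall>\<alpha>\<in>S. w \<alpha> = (\<Sum>e\<in>insert e0 E. (c(e0 := t)) e * u e \<alpha>)"
      proof
        fix \<alpha> assume "\<alpha> \<in> S"
        have "(\<Sum>e\<in>insert e0 E. (c(e0 := t)) e * u e \<alpha>) = t * u e0 \<alpha> + (\<Sum>e\<in>E. (c(e0 := t)) e * u e \<alpha>)"
          using insert by simp
        also have "(\<Sum>e\<in>E. (c(e0 := t)) e * u e \<alpha>) = (\<Sum>e\<in>E. c e * u e \<alpha>)" by (rule sum.cong) (use insert in auto)
        finally show "w \<alpha> = (\<Sum>e\<in>insert e0 E. (c(e0 := t)) e * u e \<alpha>)" using c \<open>\<alpha> \<in> S\<close> unfolding w'_def by (metis diff_add_cancel add.commute)
      qed
      thus ?thesis by blast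
    next
      assume "\<exists>z. (\<forall>e\<in>E. (\<Sum>\<alpha>\<in>S. z \<alpha> * u e \<alpha>) = 0) \<and> (\<Sum>\<alpha>\<in>S. z \<alpha> * w' \<alpha>) = 1"
      then obtain z1 where z1: "\<forall>e\<in>E. (\<Sum>\<alpha>\<in>S. z1 \<alpha> * u e \<alpha>) = 0" "(\<Sum>\<alpha>\<in>S. z1 \<alpha> * w' \<alpha>) = 1" by blast
      define m where "m = (\<Sum>\<alpha>\<in>S. z1 \<alpha> * u e0 \<alpha>)"
      define z where "z = (\<lambda>\<alpha>. z1 \<alpha> - m * z2 \<alpha>)"
      have "\<forall>e\<in>insert e0 E. (\<Sum>\<alpha>\<in>S. z \<alpha> * u e \<alpha>) = 0"
        using z1 z2 unfolding z_def dot_lin1 m_def by auto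
      moreover have "(\<Sum>\<alpha>\<in>S. z \<alpha> * w \<alpha>) = 1"
      proof -
        have "(\<Sum>\<alpha>\<in>S. z1 \<alpha> * w' \<alpha>) = (\<Sum>\<alpha>\<in>S. z1 \<alpha> * w \<alpha>) - t * m"
          unfolding w'_def dot_lin2 m_def ..
        thus ?thesis using z1(2) unfolding z_def dot_lin1 t_def by (simp add: algebra_simps)
      qed
      ultimately show ?thesis by blast
    qed
  qed
qed




lemma choose_step: "Suc k * (n choose Suc k) = (n - k) * (n choose k)"
  using binomial_absorption[of k n] binomial_absorb_comp[of n k] by simp

lemma binom_ratio:
  assumes "M \<le> N"
  shows "real (M choose n) * real N ^ n \<le> real (N choose n) * real M ^ n"
proof (induction n)
  case 0 thus ?case by simp
next
  case (Suc n)
  show ?case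
  proof (cases "n \<le> M")
    case False
    hence "M choose Suc n = 0" by (simp add: binomial_eq_0)
    hence z: "real (M choose Suc n) * real N ^ Suc n = 0" by (simp only: of_nat_0 mult_zero_left)
    have "0 \<le> real (N choose Suc n) * real M ^ Suc n" by simp
    thus ?thesis using z by linarith
  next
    case True
    have nN: "n \<le> N" using True assms by simp
    have A: "real (Suc n) * real (M choose Suc n) = (real M - real n) * real (M choose n)"
      using choose_step[of n M] True by (metis of_nat_diff of_nat_mult)
    have B: "real (Suc n) * real (N choose Suc n) = (real N - real n) * real (N choose n)"
      using choose_step[of n N] nN by (metis of_nat_diff of_nat_mult)
    have "real (Suc n) * (real (M choose Suc n) * real N ^ Suc n)
          = (real (Suc n) * real (M choose Suc n)) * (real N * real N ^ n)"
      by (simp only: power_Suc mult.assoc)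
    also have "\<dots> = ((real M - real n) * real (M choose n)) * (real N * real N ^ n)"
      by (simp only: A)
    also have "\<dots> = ((real M - real n) * real N) * (real (M choose n) * real N ^ n)"
      by (simp only: mult_ac)
    also have "\<dots> \<le> ((real M - real n) * real N) * (real (N choose n) * real M ^ n)"
      using Suc.IH True by (intro mult_left_mono) auto
    also have "\<dots> \<le> ((real N - real n) * real M) * (real (N choose n) * real M ^ n)"
    proof (rule mult_right_mono)
      show "(real M - real n) * real N \<le> (real N - real n) * real M"
        using assms by (simp add: algebra_simps mult_right_mono)
    qed auto
    also have "\<dots> = ((real N - real n) * real (N choose n)) * (real M * real M ^ n)"
      by (simp only: mult_ac)
    also have "\<dots> = (real (Suc n) * real (N choose Suc n)) * (real M * real M ^ n)"
      by (simp only: B)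
    also have "\<dots> = real (Suc n) * (real (N choose Suc n) * real M ^ Suc n)"
      by (simp only: power_Suc mult.assoc)
    finally show ?thesis by (rule mult_left_le_imp_le) auto
  qed
qed

lemma card_Ecal:
  assumes "m \<ge> 1"
  shows "card (Ecal q k m) \<le> (k + m) choose m"
proof -
  define f where "f = (\<lambda>e::nat\<Rightarrow>nat. map e [0..<k] @ [m - 1 - norm1 k e])"
  have sl: "sum_list (map e [0..<k]) = norm1 k e" for e
    unfolding norm1_def by (simp add: interv_sum_list_conv_sum_set_nat lessThan_atLeast0)
  have inj: "inj_on f (Ecal q k m)"
  proof
    fix e e' assume e: "e \<in> Ecal q k m" and e': "e' \<in> Ecal q k m" and eq: "f e = f e'"
    hence "map e [0..<k] = map e' [0..<k]" unfolding f_def by simp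
    hence "\<forall>i<k. e i = e' i" by (simp add: map_eq_conv)
    moreover have "\<forall>i. i \<ge> k \<longrightarrow> e i = e' i"
      using e e' by (auto simp: Ecal_def exps_def PiE_def extensional_def)
    ultimately show "e = e'" by (metis ext not_le)
  qed
  have "f ` Ecal q k m \<subseteq> {l. length l = k + 1 \<and> sum_list l = m - 1}"
    using sl by (auto simp: f_def Ecal_def)
  moreover have fin: "finite {l::nat list. length l = k + 1 \<and> sum_list l = m - 1}"
    by (rule card_ge_0_finite) (simp add: card_length_sum_list zero_less_binomial)
  ultimately have "card (f ` Ecal q k m) \<le> card {l::nat list. length l = k + 1 \<and> sum_list l = m - 1}"
    by (intro card_mono)
  hence "card (Ecal q k m) \<le> card {l::nat list. length l = k + 1 \<and> sum_list l = m - 1}"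
    using card_image[OF inj] by simp
  also have "\<dots> = (m - 1 + k) choose (m - 1)" by (subst card_length_sum_list) simp
  also have "\<dots> \<le> (k + m) choose m"
  proof -
    obtain m' where m': "m = Suc m'" using assms by (cases m) auto
    have "(m' + k) choose m' \<le> Suc (m' + k) choose Suc m'" by simp
    moreover have "m - 1 + k = m' + k" "k + m = Suc (m' + k)" "m - 1 = m'" using m' by simp_all
    ultimately show ?thesis using m' by (simp only:)
  qed
  finally show ?thesis .
qed


theorem lemma4p3:
  fixes p l q d s r k Qn :: nat
  assumes "prime p" and "l \<ge> 1" and "q = p ^ l" and "CARD('a::{finite,field}) = q"
    and "d \<ge> 1"
    and "d + 1 = s * (q - q div p) + r" and "r < q - q div p"
    and "k \<ge> s + 1"
    and "Qn = nat \<lceil>2 * real q ^ (s + 1) * ln (real q)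
                  * real ((k + norm1 k (estar p q s k)) choose norm1 k (estar p q s k))\<rceil>"
    and "Qn \<le> q ^ k"
  shows "(let dstar = norm1 k (estar p q s k);
              N = (k + dstar) choose dstar;
              AllS = {S :: (nat \<Rightarrow> 'a) set. S \<subseteq> points k \<and> card S = Qn};
              Bad = {S \<in> AllS. \<not> system_solvable q k dstar (estar p q s k) S}
          in real (card Bad) / real (card AllS) \<le> 1 / real q ^ N)"
proof -
  have q2: "q \<ge> 2" using card_ge2[where 'a='a] assms(4) by simp
  have p2: "p \<ge> 2" using assms(1) by (simp add: prime_ge_2_nat)
  have pq: "p \<le> q" using assms(2,3) p2
  proof -
    have "p ^ 1 \<le> p ^ l" using assms(2) p2 by (intro power_increasing) auto
    thus ?thesis using assms(3) by simp
  qed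
  have hq1: "1 \<le> q div p" using pq p2 div_le_mono[OF pq, of p] by simp
  have hq2: "q div p < q" using p2 q2 by (intro div_less_dividend) auto
  have sk: "s < k" using assms(8) by simp
  define es where "es = estar p q s k"
  have es_lo: "\<And>i. i \<le> s \<Longrightarrow> 1 \<le> es i \<and> es i < CARD('a)"
    using hq1 hq2 q2 sk assms(4) by (auto simp: es_def estar_def)
  have es0: "\<And>i. s < i \<Longrightarrow> i < k \<Longrightarrow> es i = 0" by (auto simp: es_def estar_def)
  define dstar where "dstar = norm1 k es"
  have dsum: "dstar = (\<Sum>i\<le>s. es i)"
  proof -
    have U: "{..<k} = {..s} \<union> {s<..<k}" using sk by auto
    have "dstar = (\<Sum>i\<le>s. es i) + (\<Sum>i\<in>{s<..<k}. es i)"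
      unfolding dstar_def norm1_def U by (rule sum.union_disjoint) auto
    also have "(\<Sum>i\<in>{s<..<k}. es i) = 0" using es0 by auto
    finally show ?thesis by simp
  qed
  have d1: "dstar \<ge> 1"
  proof -
    have "es s \<le> (\<Sum>i\<le>s. es i)" by (rule member_le_sum) auto
    thus ?thesis using es_lo[of s] dsum by simp
  qed
  define E where "E = Ecal q k dstar"
  have finE: "finite E"
    by (rule finite_subset[of _ "exps q k"]) (auto simp: E_def Ecal_def exps_def intro!: finite_PiE)
  have Eprop: "\<And>e. e \<in> E \<Longrightarrow> (\<forall>i\<le>s. e i < CARD('a)) \<and> \<not>(\<forall>i\<le>s. e i = es i)"
  proof -
    fix e assume e: "e \<in> E"
    hence ex: "e \<in> exps q k" and nrm: "norm1 k e \<le> dstar - 1" by (auto simp: E_def Ecal_def)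
    have lt: "\<forall>i\<le>s. e i < CARD('a)" using ex sk assms(4) by (auto simp: exps_def PiE_def Pi_def)
    moreover have "\<not>(\<forall>i\<le>s. e i = es i)"
    proof
      assume eq: "\<forall>i\<le>s. e i = es i"
      have "(\<Sum>i\<le>s. e i) \<le> norm1 k e" unfolding norm1_def using sk by (intro sum_mono2) auto
      moreover have "(\<Sum>i\<le>s. e i) = dstar" using eq dsum by simp
      ultimately show False using nrm d1 by linarith
    qed
    ultimately show "(\<forall>i\<le>s. e i < CARD('a)) \<and> \<not>(\<forall>i\<le>s. e i = es i)" by blast
  qed
  define g where "g = (\<lambda>c (\<alpha>::nat\<Rightarrow>'a). monomial_eval k \<alpha> es - (\<Sum>e\<in>E. c e * monomial_eval k \<alpha> e))"
  define Z where "Z = (\<lambda>c. {\<alpha> \<in> points k. g c \<alpha> = 0})"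
  define MM where "MM = q ^ k - q ^ (k - s - 1)"
  have finP: "finite (points k :: (nat\<Rightarrow>'a) set)" by (simp add: points_def finite_PiE)
  have cardP: "card (points k :: (nat\<Rightarrow>'a) set) = q ^ k" by (simp add: points_def card_PiE assms(4))
  have finZ: "\<And>c. finite (Z c)" unfolding Z_def using finP by auto
  have cardZ: "\<And>c. card (Z c) \<le> MM"
  proof -
    fix c
    let ?NZ = "{\<alpha> \<in> points k. g c \<alpha> \<noteq> 0}"
    have "CARD('a) ^ (k - s - 1) \<le> card ?NZ"
      unfolding g_def by (rule nz_count[OF sk es_lo es0 Eprop])
    moreover have "card (Z c) + card ?NZ = card (points k :: (nat\<Rightarrow>'a) set)"
    proof -
      have "Z c \<union> ?NZ = points k" "Z c \<inter> ?NZ = {}" unfolding Z_def by auto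
      thus ?thesis using card_Un_disjoint[of "Z c" ?NZ] finP finZ by (metis finite_Un)
    qed
    ultimately show "card (Z c) \<le> MM" unfolding MM_def using cardP assms(4) by simp
  qed
  define AllS where "AllS = {S :: (nat \<Rightarrow> 'a) set. S \<subseteq> points k \<and> card S = Qn}"
  define Bad where "Bad = {S \<in> AllS. \<not> system_solvable q k dstar es S}"
  define Nn where "Nn = (k + dstar) choose dstar"
  have Bad_sub: "Bad \<subseteq> (\<Union>c \<in> PiE E (\<lambda>_. UNIV). {S. S \<subseteq> Z c \<and> card S = Qn})"
  proof
    fix S assume "S \<in> Bad"
    hence S: "S \<subseteq> points k" "card S = Qn" "\<not> system_solvable q k dstar es S"
      by (auto simp: Bad_def AllS_def)
    have finS: "finite S" using S(1) finP by (rule finite_subset)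
    have D: "(\<exists>c. \<forall>\<alpha>\<in>S. monomial_eval k \<alpha> es = (\<Sum>e\<in>E. c e * monomial_eval k \<alpha> e)) \<or>
         (\<exists>z. (\<forall>e\<in>E. (\<Sum>\<alpha>\<in>S. z \<alpha> * monomial_eval k \<alpha> e) = 0) \<and> (\<Sum>\<alpha>\<in>S. z \<alpha> * monomial_eval k \<alpha> es) = 1)"
      by (rule dual[OF finE finS])
    have nB: "\<not> (\<exists>z. (\<forall>e\<in>E. (\<Sum>\<alpha>\<in>S. z \<alpha> * monomial_eval k \<alpha> e) = 0) \<and> (\<Sum>\<alpha>\<in>S. z \<alpha> * monomial_eval k \<alpha> es) = 1)"
      using S(3) unfolding system_solvable_def E_def .
    have "\<exists>c. \<forall>\<alpha>\<in>S. monomial_eval k \<alpha> es = (\<Sum>e\<in>E. c e * monomial_eval k \<alpha> e)"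
      using D by (elim disjE) (assumption, erule notE[OF nB])
    then obtain c where c: "\<forall>\<alpha>\<in>S. monomial_eval k \<alpha> es = (\<Sum>e\<in>E. c e * monomial_eval k \<alpha> e)" ..
    have "S \<subseteq> Z (restrict c E)"
    proof
      fix \<alpha> assume a: "\<alpha> \<in> S"
      have "(\<Sum>e\<in>E. restrict c E e * monomial_eval k \<alpha> e) = (\<Sum>e\<in>E. c e * monomial_eval k \<alpha> e)"
        by (rule sum.cong) auto
      thus "\<alpha> \<in> Z (restrict c E)" using a c S(1) unfolding Z_def g_def by auto
    qed
    moreover have "restrict c E \<in> PiE E (\<lambda>_. UNIV)" by simp
    ultimately show "S \<in> (\<Union>c \<in> PiE E (\<lambda>_. UNIV). {S. S \<subseteq> Z c \<and> card S = Qn})" using S(2) by blast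
  qed
  have cardBad: "card Bad \<le> q ^ card E * (MM choose Qn)"
  proof -
    have finU: "finite (\<Union>c \<in> PiE E (\<lambda>_. UNIV::'a set). {S. S \<subseteq> Z c \<and> card S = Qn})"
      by (rule finite_subset[of _ "Pow (points k)"]) (use finP in \<open>auto simp: Z_def\<close>)
    have "card Bad \<le> card (\<Union>c \<in> PiE E (\<lambda>_. UNIV::'a set). {S. S \<subseteq> Z c \<and> card S = Qn})"
      by (rule card_mono[OF finU Bad_sub])
    also have "\<dots> \<le> (\<Sum>c \<in> PiE E (\<lambda>_. UNIV::'a set). card {S. S \<subseteq> Z c \<and> card S = Qn})"
      by (rule card_UN_le) (simp add: finE finite_PiE)
    also have "\<dots> \<le> (\<Sum>c \<in> PiE E (\<lambda>_. UNIV::'a set). MM choose Qn)"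
    proof (rule sum_mono)
      fix c :: "(nat\<Rightarrow>nat) \<Rightarrow> 'a"
      have "card {S. S \<subseteq> Z c \<and> card S = Qn} = card (Z c) choose Qn" by (rule n_subsets[OF finZ])
      also have "\<dots> \<le> MM choose Qn" by (rule binomial_right_mono[OF cardZ])
      finally show "card {S. S \<subseteq> Z c \<and> card S = Qn} \<le> MM choose Qn" .
    qed
    also have "\<dots> = q ^ card E * (MM choose Qn)"
      using finE by (simp add: card_PiE assms(4))
    finally show ?thesis .
  qed
  have cardAll: "card AllS = q ^ k choose Qn"
    unfolding AllS_def using n_subsets[OF finP, of Qn] cardP by simp
  have Epos: "card E \<le> Nn" unfolding E_def Nn_def by (rule card_Ecal[OF d1])
  have final: "real (card Bad) / real (card AllS) \<le> 1 / real q ^ Nn"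
  proof -
    define \<delta> where "\<delta> = 1 / real q ^ (s + 1)"
    define NN where "NN = q ^ k"
    have rq: "real q \<ge> 2" using q2 by simp
    have qpow_le: "q ^ (k - s - 1) \<le> q ^ k" using q2 by (intro power_increasing) auto
    have MMle: "MM \<le> NN" unfolding MM_def NN_def by simp
    have NNpos: "0 < NN" unfolding NN_def using q2 by simp
    have "1 \<le> real q ^ (s + 1)" using rq by (intro one_le_power) auto
    hence dpos: "0 < \<delta>" "\<delta> \<le> 1" unfolding \<delta>_def by auto
    have MMeq: "real MM / real NN = 1 - \<delta>"
    proof -
      have k: "k = (k - s - 1) + (s + 1)" using sk by simp
      have "real NN = real q ^ (k - s - 1) * real q ^ (s + 1)"
        unfolding NN_def by (subst k) (simp add: power_add)
      moreover have "real MM = real q ^ k - real q ^ (k - s - 1)"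
        unfolding MM_def using qpow_le by (simp add: of_nat_diff)
      moreover have "real q ^ k = real q ^ (k - s - 1) * real q ^ (s + 1)"
        by (subst k) (simp add: power_add)
      ultimately show ?thesis unfolding \<delta>_def using rq by (simp add: field_simps)
    qed
    have AllSpos: "0 < real (card AllS)" using cardAll assms(10) by (simp add: zero_less_binomial)
    have CNpos: "0 < real (NN choose Qn)" using assms(10) unfolding NN_def by (simp add: zero_less_binomial)
    have ratio: "real (MM choose Qn) / real (NN choose Qn) \<le> (1 - \<delta>) ^ Qn"
    proof -
      have "real (MM choose Qn) * real NN ^ Qn \<le> real (NN choose Qn) * real MM ^ Qn"
        by (rule binom_ratio[OF MMle])
      hence "real (MM choose Qn) / real (NN choose Qn) \<le> real MM ^ Qn / real NN ^ Qn"
        using CNpos NNpos by (simp add: divide_simps mult.commute)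
      moreover have "real MM ^ Qn / real NN ^ Qn = (1 - \<delta>) ^ Qn"
        using MMeq by (metis power_divide)
      ultimately show ?thesis by simp
    qed
    have e1: "(1 - \<delta>) ^ Qn \<le> exp (- (\<delta> * real Qn))"
    proof -
      have "(1 - \<delta>) ^ Qn \<le> exp (- \<delta>) ^ Qn"
        by (rule power_mono) (use dpos exp_ge_add_one_self[of "- \<delta>"] in auto)
      also have "\<dots> = exp (real Qn * (- \<delta>))" by (rule exp_of_nat_mult[symmetric])
      finally show ?thesis by (simp add: algebra_simps)
    qed
    have Qge: "real Qn \<ge> 2 * real q ^ (s + 1) * ln (real q) * real Nn"
      using assms(9) of_nat_ceiling unfolding Nn_def dstar_def es_def by metis
    have lnq: "ln (real q) > 0" using rq by simp
    have e2: "\<delta> * real Qn \<ge> real (2 * Nn) * ln (real q)"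
    proof -
      have "\<delta> * real Qn \<ge> \<delta> * (2 * real q ^ (s + 1) * ln (real q) * real Nn)"
        using Qge dpos by (intro mult_left_mono) auto
      moreover have "\<delta> * (2 * real q ^ (s + 1) * ln (real q) * real Nn) = real (2 * Nn) * ln (real q)"
        unfolding \<delta>_def using rq by (simp add: field_simps)
      ultimately show ?thesis by linarith
    qed
    have e3: "exp (- (\<delta> * real Qn)) \<le> 1 / real q ^ (2 * Nn)"
    proof -
      have x: "exp (real (2 * Nn) * ln (real q)) = real q ^ (2 * Nn)"
        by (subst exp_of_nat_mult) (use rq in simp)
      have y: "exp (- (real (2 * Nn) * ln (real q))) = 1 / real q ^ (2 * Nn)"
        using x by (simp add: exp_minus inverse_eq_divide)
      have "exp (- (\<delta> * real Qn)) \<le> exp (- (real (2 * Nn) * ln (real q)))"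
        using e2 by (simp only: exp_le_cancel_iff neg_le_iff_le)
      also note y
      finally show ?thesis .
    qed
    have e4: "real q ^ card E \<le> real q ^ Nn" using Epos rq by (intro power_increasing) auto
    have "real (card Bad) / real (card AllS) \<le> real (q ^ card E * (MM choose Qn)) / real (NN choose Qn)"
    proof -
      have c1: "card AllS = NN choose Qn" using cardAll unfolding NN_def .
      have "real (card Bad) \<le> real (q ^ card E * (MM choose Qn))" using cardBad by (rule of_nat_mono)
      thus ?thesis unfolding c1 by (rule divide_right_mono) simp
    qed
    also have "\<dots> = real q ^ card E * (real (MM choose Qn) / real (NN choose Qn))" by simp
    also have "\<dots> \<le> real q ^ Nn * (1 / real q ^ (2 * Nn))"
    proof (rule mult_mono)
      show "real (MM choose Qn) / real (NN choose Qn) \<le> 1 / real q ^ (2 * Nn)"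
        using ratio e1 e3 by linarith
    qed (use e4 in auto)
    also have "\<dots> = 1 / real q ^ Nn"
    proof -
      have "real q ^ (2 * Nn) = real q ^ Nn * real q ^ Nn" by (simp only: mult_2 power_add)
      moreover have "real q ^ Nn \<noteq> 0" using rq by simp
      ultimately show ?thesis by simp
    qed
    finally show ?thesis .
  qed
  note final' = final[unfolded Bad_def AllS_def Nn_def dstar_def es_def]
  show ?thesis
    unfolding Let_def by (rule final')
qed

end
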